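(* Let $v=(x,y)\in T$ be a point with at least one irrational coordinate. Then $G^k(v)\neq(0,0)$ for all $k\ge0$, so its itinerary is defined, and: the itinerary of $v$ consists only of symbols of type $\mathbb{A}$ if and only if $y = 0$. Moreover, if the itinerary is $\mathbb{A}_{a_1},\mathbb{A}_{a_2},\dots$, then $x = [0;a_1,a_2,\dots]$ (regular continued fraction).
   Context: Let $T = \{(x,y)\in\mathbb{R}^2 : 0 \le y \le x \le 1\}$. For integers $n\ge1$ define $\mathbb{A}_n = \{(x,y) : \frac{1}{n+1} < x \le \frac1n,\ 0 \le y \le 1-nx\}$ and $\mathbb{B}_n = \{(x,y) : 1-nx < y \le x \le \frac1n\}$; these together with $\{(0,0)\}$ partition $T$. The 2-dimensional Gauss map $G:T\to T$ is $G(0,0)=(0,0)$, $G(x,y)=\left(\frac1x-n,\frac yx\right)$ on $\mathbb{A}_n$, $G(x,y)=\left(\frac{1-y}{x}-n+1,\frac{x-y}{x}\right)$ on $\mathbb{B}_n$. For a point $v$ whose forward orbit never hits $(0,0)$, its itinerary is the sequence of symbols $\mathbb{X}_{a_1},\mathbb{X}_{a_2},\dots$ ($\mathbb{X}\in\{\mathbb{A},\mathbb{B}\}$, $a_k\ge1$) with $G^{k-1}(v)\in\mathbb{X}_{a_k}$ for all $k\ge1$. *)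

theory Defs
  imports Complex_Main
begin

definition Tset :: "(real \<times> real) set" where
  "Tset = {(x, y). 0 \<le> y \<and> y \<le> x \<and> x \<le> 1}"

definition Aset :: "nat \<Rightarrow> (real \<times> real) set" where
  "Aset n = {(x, y). 1 / real (n + 1) < x \<and> x \<le> 1 / real n \<and> 0 \<le> y \<and> y \<le> 1 - real n * x}"

definition Bset :: "nat \<Rightarrow> (real \<times> real) set" where
  "Bset n = {(x, y). 1 - real n * x < y \<and> y \<le> x \<and> x \<le> 1 / real n}"

text \<open>The 2-dimensional Gauss map (on points outside T it is set to (0,0)).\<close>
definition Gmap :: "real \<times> real \<Rightarrow> real \<times> real" where
  "Gmap v = (let x = fst v; y = snd v in
     if v = (0, 0) then (0, 0)
     else if \<exists>n\<ge>1. v \<in> Aset n then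
       (let n = (THE n. n \<ge> 1 \<and> v \<in> Aset n) in (1 / x - real n, y / x))
     else if \<exists>n\<ge>1. v \<in> Bset n then
       (let n = (THE n. n \<ge> 1 \<and> v \<in> Bset n) in ((1 - y) / x - real n + 1, (x - y) / x))
     else (0, 0))"

text \<open>Finite continued fraction [0; a 0, a 1, ..., a (n-1)] (0-based indexing of partial quotients).\<close>
fun cfrac :: "(nat \<Rightarrow> nat) \<Rightarrow> nat \<Rightarrow> real" where
  "cfrac a 0 = 0"
| "cfrac a (Suc n) = 1 / (real (a 0) + cfrac (\<lambda>k. a (Suc k)) n)"

definition is_cf_value :: "(nat \<Rightarrow> nat) \<Rightarrow> real \<Rightarrow> bool" where
  "is_cf_value a x \<longleftrightarrow> (\<lambda>n. cfrac a n) \<longlonglongrightarrow> x"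

end

theory Submission imports Defs begin

lemma Aset_iff:
  assumes "n \<ge> 1"
  shows "(x,y) \<in> Aset n \<longleftrightarrow> 1 < (real n + 1) * x \<and> real n * x \<le> 1 \<and> 0 \<le> y \<and> y \<le> 1 - real n * x"
proof -
  have n0: "real n > 0" using assms by simp
  have "1 / real (n+1) < x \<longleftrightarrow> 1 < (real n + 1) * x"
    by (simp add: divide_less_eq algebra_simps)
  moreover have "x \<le> 1 / real n \<longleftrightarrow> real n * x \<le> 1"
    using n0 by (simp add: le_divide_eq mult.commute)
  ultimately show ?thesis unfolding Aset_def by auto
qed

lemma Bset_iff:
  assumes "n \<ge> 1"
  shows "(x,y) \<in> Bset n \<longleftrightarrow> 1 - real n * x < y \<and> y \<le> x \<and> real n * x \<le> 1"
proof -
  have n0: "real n > 0" using assms by simp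
  have "x \<le> 1 / real n \<longleftrightarrow> real n * x \<le> 1"
    using n0 by (simp add: le_divide_eq mult.commute)
  then show ?thesis unfolding Bset_def by auto
qed

lemma le_from_mult:
  fixes x :: real
  assumes "real n * x \<le> 1" "1 < (real m + 1) * x" "x > 0"
  shows "n \<le> m"
proof (rule ccontr)
  assume "\<not> n \<le> m"
  then have "real m + 1 \<le> real n" by simp
  then have "(real m + 1) * x \<le> real n * x" using assms(3) by (simp add: mult_right_mono)
  then show False using assms by linarith
qed

lemma posA: "1 < (real n + 1) * (x::real) \<Longrightarrow> x > 0"
proof (rule ccontr)
  assume h: "1 < (real n + 1) * x" "\<not> x > 0"
  then have "(real n + 1) * x \<le> 0" by (intro mult_nonneg_nonpos) auto
  then show False using h by linarith
qed

lemma posB: "1 - real n * x < y \<Longrightarrow> y \<le> (x::real) \<Longrightarrow> x > 0"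
proof (rule ccontr)
  assume h: "1 - real n * x < y" "y \<le> x" "\<not> x > 0"
  then have "real n * x \<le> 0" by (intro mult_nonneg_nonpos) auto
  then show False using h by linarith
qed

lemma A_unique:
  assumes "p \<in> Aset n" "p \<in> Aset m" "n \<ge> 1" "m \<ge> 1" shows "n = m"
proof -
  obtain x y where p: "p = (x,y)" by fastforce
  have a: "1 < (real n + 1) * x \<and> real n * x \<le> 1" using assms p Aset_iff by auto
  have b: "1 < (real m + 1) * x \<and> real m * x \<le> 1" using assms p Aset_iff by auto
  have x0: "x > 0" using a posA posB by blast
  show ?thesis using le_from_mult[of n x m] le_from_mult[of m x n] a b x0 by auto
qed

lemma AB_disj:
  assumes "p \<in> Aset m" "p \<in> Bset n" "n \<ge> 1" "m \<ge> 1" shows False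
proof -
  obtain x y where p: "p = (x,y)" by fastforce
  have a: "1 < (real m + 1) * x \<and> real m * x \<le> 1 \<and> 0 \<le> y \<and> y \<le> 1 - real m * x" using assms p Aset_iff by auto
  have b: "1 - real n * x < y \<and> y \<le> x \<and> real n * x \<le> 1" using assms p Bset_iff by auto
  have x0: "x > 0" using a posA posB by blast
  have "n \<le> m" using le_from_mult[of n x m] a b x0 by auto
  then have "real n * x \<le> real m * x" using x0 by (simp add: mult_right_mono)
  then show False using a b by linarith
qed

lemma B_unique:
  assumes "p \<in> Bset n" "p \<in> Bset m" "n \<ge> 1" "m \<ge> 1" "n < m" shows False
proof -
  obtain x y where p: "p = (x,y)" by fastforce
  have a: "1 - real n * x < y \<and> y \<le> x \<and> real n * x \<le> 1" using assms p Bset_iff by auto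
  have b: "1 - real m * x < y \<and> y \<le> x \<and> real m * x \<le> 1" using assms p Bset_iff by auto
  have x0: "x \<ge> 0" using posB a by fastforce
  have "real n + 1 \<le> real m" using assms by simp
  then have "(real n + 1) * x \<le> real m * x" using x0 by (simp add: mult_right_mono)
  then show False using a b by (simp add: algebra_simps)
qed

lemma G_A:
  assumes "n \<ge> 1" "(x,y) \<in> Aset n"
  shows "Gmap (x,y) = (1/x - real n, y/x)"
proof -
  have ne: "(x,y) \<noteq> (0,0)" using assms Aset_iff by fastforce
  have th: "(THE n. n \<ge> 1 \<and> (x,y) \<in> Aset n) = n"
    by (rule the_equality) (use assms A_unique in auto)
  show ?thesis unfolding Gmap_def Let_def using ne assms th by auto
qed

lemma G_B:
  assumes "n \<ge> 1" "(x,y) \<in> Bset n"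
  shows "Gmap (x,y) = ((1 - y)/x - real n + 1, (x - y)/x)"
proof -
  have ne: "(x,y) \<noteq> (0,0)" using assms Bset_iff by fastforce
  have nA: "\<not> (\<exists>m\<ge>1. (x,y) \<in> Aset m)" using assms AB_disj by blast
  have th: "(THE n. n \<ge> 1 \<and> (x,y) \<in> Bset n) = n"
  proof (rule the_equality)
    fix m assume "m \<ge> 1 \<and> (x,y) \<in> Bset m"
    then show "m = n" using assms B_unique[of "(x,y)" n m] B_unique[of "(x,y)" m n] by (metis nat_neq_iff)
  qed (use assms in auto)
  show ?thesis unfolding Gmap_def Let_def using ne nA assms th by auto
qed

lemma cover:
  assumes "(x,y) \<in> Tset" "(x,y) \<noteq> (0,0)"
  shows "(\<exists>n\<ge>1. (x,y) \<in> Aset n) \<or> (\<exists>n\<ge>1. (x,y) \<in> Bset n)"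
proof -
  have T: "0 \<le> y" "y \<le> x" "x \<le> 1" using assms unfolding Tset_def by auto
  have x0: "x > 0" using T assms by force
  define n where "n = nat \<lfloor>1/x\<rfloor>"
  have ge1: "1/x \<ge> 1" using x0 T by (simp add: field_simps)
  have n1: "n \<ge> 1" unfolding n_def using ge1 by linarith
  have fl: "\<lfloor>1/x\<rfloor> \<ge> 1" using floor_mono[OF ge1] by simp
  have rn: "real n = of_int \<lfloor>1/x\<rfloor>" unfolding n_def by (rule of_nat_nat) (use fl in linarith)
  have "real n \<le> 1/x" "1/x < real n + 1" using rn by linarith+
  then have h1: "real n * x \<le> 1" and h2: "1 < (real n + 1) * x"
    using x0 by (simp_all add: field_simps)
  show ?thesis
  proof (cases "y \<le> 1 - real n * x")
    case True
    then have "(x,y) \<in> Aset n" using Aset_iff[OF n1] h1 h2 T by auto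
    then show ?thesis using n1 by blast
  next
    case False
    then have "(x,y) \<in> Bset n" using Bset_iff[OF n1] h1 T by auto
    then show ?thesis using n1 by blast
  qed
qed

lemma A_T:
  assumes "n \<ge> 1" "(x,y) \<in> Aset n"
  shows "(1/x - real n, y/x) \<in> Tset"
proof -
  have a: "1 < (real n + 1) * x" "real n * x \<le> 1" "0 \<le> y" "y \<le> 1 - real n * x"
    using Aset_iff[OF assms(1)] assms(2) by auto
  have x0: "x > 0" using a posA posB by blast
  have "0 \<le> 1/x - real n" using a x0 by (simp add: field_simps)
  moreover have "1/x - real n \<le> 1" using a x0 by (simp add: field_simps)
  moreover have "0 \<le> y/x" using a x0 by simp
  moreover have "y/x \<le> 1/x - real n" using a x0 by (simp add: field_simps)
  ultimately show ?thesis unfolding Tset_def by auto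
qed

lemma B_T:
  assumes "n \<ge> 1" "(x,y) \<in> Bset n"
  shows "((1 - y)/x - real n + 1, (x - y)/x) \<in> Tset"
proof -
  have a: "1 - real n * x < y" "y \<le> x" "real n * x \<le> 1"
    using Bset_iff[OF assms(1)] assms(2) by auto
  have x0: "x > 0" using a posA posB by blast
  have "(1 - y)/x - real n + 1 \<le> 1" using a x0 by (simp add: field_simps)
  moreover have "0 \<le> (x - y)/x" using a x0 by simp
  moreover have "(x - y)/x \<le> (1 - y)/x - real n + 1" using a x0 by (simp add: field_simps)
  ultimately show ?thesis unfolding Tset_def by auto
qed

definition irr :: "real \<times> real \<Rightarrow> bool" where
  "irr p \<longleftrightarrow> fst p \<notin> \<rat> \<or> snd p \<notin> \<rat>"

lemma Rats_of_inv: "1/(x::real) \<in> \<rat> \<Longrightarrow> x \<in> \<rat>"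
  using Rats_divide[OF Rats_1, of "1/x"] by simp

lemma irr_A:
  assumes "irr (x,y)" "x > 0"
  shows "irr (1/x - real n, y/x)"
proof (rule ccontr)
  assume "\<not> irr (1/x - real n, y/x)"
  then have q1: "1/x - real n \<in> \<rat>" and q2: "y/x \<in> \<rat>" unfolding irr_def by auto
  have "1/x \<in> \<rat>" using Rats_add[OF q1 Rats_of_nat[of n]] by simp
  then have qx: "x \<in> \<rat>" by (rule Rats_of_inv)
  have "y = (y/x) * x" using assms by simp
  then have "y \<in> \<rat>" using Rats_mult[OF q2 qx] by simp
  then show False using qx assms unfolding irr_def by auto
qed

lemma irr_B:
  assumes "irr (x,y)" "x > 0"
  shows "irr ((1 - y)/x - real n + 1, (x - y)/x)"
proof (rule ccontr)
  assume "\<not> irr ((1 - y)/x - real n + 1, (x - y)/x)"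
  then have q1: "(1 - y)/x - real n + 1 \<in> \<rat>" and q2: "(x - y)/x \<in> \<rat>" unfolding irr_def by auto
  have e2: "(x - y)/x = 1 - y/x" using assms by (simp add: field_simps)
  have yq: "y/x \<in> \<rat>" using Rats_diff[OF Rats_1 q2] e2 by simp
  have e1: "1/x = ((1 - y)/x - real n + 1) + y/x + real n - 1" by (simp add: diff_divide_distrib)
  have "((1 - y)/x - real n + 1) + y/x + real n - 1 \<in> \<rat>"
    by (intro Rats_add Rats_diff q1 yq Rats_of_nat Rats_1)
  then have "1/x \<in> \<rat>" using e1 by simp
  then have qx: "x \<in> \<rat>" by (rule Rats_of_inv)
  have "y = (y/x) * x" using assms by simp
  then have "y \<in> \<rat>" using Rats_mult[OF yq qx] by simp
  then show False using qx assms unfolding irr_def by auto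
qed

lemma irr_nz: "irr p \<Longrightarrow> p \<noteq> (0,0)" unfolding irr_def by auto

lemma step:
  assumes "p \<in> Tset" "irr p"
  shows "Gmap p \<in> Tset \<and> irr (Gmap p)"
proof -
  obtain x y where p: "p = (x,y)" by fastforce
  have nz: "(x,y) \<noteq> (0,0)" using irr_nz assms p by auto
  have x0: "x > 0" using assms p nz unfolding Tset_def by force
  from cover[OF _ nz] assms p consider n where "n \<ge> 1" "(x,y) \<in> Aset n"
    | n where "n \<ge> 1" "(x,y) \<in> Bset n" by blast
  then show ?thesis
  proof cases
    case 1
    then have "Gmap p = (1/x - real n, y/x)" using G_A p by simp
    then show ?thesis using A_T[OF 1] irr_A[OF _ x0] assms p by simp
  next
    case 2
    then have "Gmap p = ((1 - y)/x - real n + 1, (x - y)/x)" using G_B p by simp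
    then show ?thesis using B_T[OF 2] irr_B[OF _ x0] assms p by simp
  qed
qed

lemma orbit:
  assumes "p \<in> Tset" "irr p"
  shows "(Gmap ^^ k) p \<in> Tset \<and> irr ((Gmap ^^ k) p)"
  by (induction k) (use assms step in auto)

lemma y0_step:
  assumes "p \<in> Tset" "irr p" "snd p = 0"
  shows "(\<exists>n\<ge>1. p \<in> Aset n) \<and> snd (Gmap p) = 0"
proof -
  obtain x where p: "p = (x,0)" using assms(3) by (metis prod.collapse)
  have nz: "(x,0) \<noteq> (0,0)" using irr_nz assms p by auto
  from cover[OF _ nz] assms p consider n where "n \<ge> 1" "(x,0) \<in> Aset n"
    | n where "n \<ge> 1" "(x,0) \<in> Bset n" by blast
  then show ?thesis
  proof cases
    case 1
    then show ?thesis using G_A[OF 1] p by auto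
  next
    case 2
    then show ?thesis using Bset_iff[of n x 0] by auto
  qed
qed

lemma double:
  assumes "p \<in> Tset" "irr p" "n \<ge> 1" "p \<in> Aset n" "m \<ge> 1" "Gmap p \<in> Aset m"
  shows "snd (Gmap (Gmap p)) \<ge> 2 * snd p"
proof -
  obtain x y where p: "p = (x,y)" by fastforce
  have a: "1 < (real n + 1) * x" "real n * x \<le> 1" "0 \<le> y" "y \<le> 1 - real n * x"
    using Aset_iff[OF assms(3)] assms(4) p by auto
  have x0: "x > 0" using a posA posB by blast
  define x1 where "x1 = 1/x - real n"
  define y1 where "y1 = y/x"
  have g1: "Gmap p = (x1, y1)" using G_A[OF assms(3)] assms(4) p x1_def y1_def by simp
  have st: "(x1,y1) \<in> Tset \<and> irr (x1,y1)" using step[OF assms(1,2)] g1 by simp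
  have x10: "x1 > 0" using st irr_nz[of "(x1,y1)"] unfolding Tset_def by force
  have gg: "snd (Gmap (Gmap p)) = y1 / x1" using G_A[OF assms(5)] assms(6) g1 by simp
  have prod: "x * x1 = 1 - real n * x" using x0 unfolding x1_def by (simp add: field_simps)
  have "real n * x \<ge> x" using assms(3) x0 by (simp add: mult_right_mono[of 1 "real n" x, simplified])
  moreover have "(real n + 1)*x = real n * x + x" by (simp add: algebra_simps)
  ultimately have le: "2 * (x * x1) \<le> 1" using prod a by linarith
  have pos: "x * x1 > 0" using x0 x10 by simp
  have "y1 / x1 = y / (x * x1)" unfolding y1_def by simp
  also have "\<dots> \<ge> 2 * y"
  proof -
    have "2 * y * (x * x1) \<le> y" using le a(3) by (metis mult.assoc mult.commute mult_left_mono mult.right_neutral)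
    then show ?thesis using pos by (simp add: le_divide_eq)
  qed
  finally show ?thesis using gg p by simp
qed

fun F :: "(nat \<Rightarrow> nat) \<Rightarrow> nat \<Rightarrow> real \<Rightarrow> real" where
  "F a 0 t = t"
| "F a (Suc n) t = 1 / (real (a 0) + F (\<lambda>k. a (Suc k)) n t)"

lemma cfrac_F: "cfrac a n = F a n 0"
  by (induction n arbitrary: a) auto

lemma F_range:
  assumes "\<forall>k. a k \<ge> 1" "0 \<le> t" "t \<le> 1"
  shows "0 \<le> F a n t \<and> F a n t \<le> 1"
  using assms
proof (induction n arbitrary: a)
  case 0 then show ?case by simp
next
  case (Suc n)
  have ih: "0 \<le> F (\<lambda>k. a (Suc k)) n t" using Suc by auto
  have "real (a 0) \<ge> 1" using Suc.prems by simp
  then show ?case using ih by (simp add: divide_le_eq)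
qed

lemma one_step:
  fixes a u w :: real
  assumes "a \<ge> 1" "0 \<le> u" "0 \<le> w"
  shows "\<bar>1/(a+u) - 1/(a+w)\<bar> \<le> \<bar>u - w\<bar>"
proof -
  have d: "1/(a+u) - 1/(a+w) = (w - u) / ((a+u)*(a+w))" using assms by (simp add: field_simps)
  have "(a+u)*(a+w) \<ge> 1" using mult_mono[of 1 "a+u" 1 "a+w"] assms by simp
  then have "\<bar>w - u\<bar> / ((a+u)*(a+w)) \<le> \<bar>w - u\<bar>"
    by (simp add: divide_le_eq mult_le_cancel_left1 mult.commute)
  moreover have ab: "\<bar>(a+u)*(a+w)\<bar> = (a+u)*(a+w)"
    using assms by (intro abs_of_nonneg) simp
  ultimately show ?thesis unfolding d abs_divide ab by (simp add: abs_minus_commute)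
qed

lemma two_step:
  fixes a c u w :: real
  assumes "a \<ge> 1" "c \<ge> 1" "0 \<le> u" "0 \<le> w"
  shows "\<bar>1/(a + 1/(c+u)) - 1/(a + 1/(c+w))\<bar> \<le> \<bar>u - w\<bar> / 4"
proof -
  have p1: "a*(c+u)+1 \<ge> 2" using mult_mono[of 1 a 1 "c+u"] assms by simp
  have p2: "a*(c+w)+1 \<ge> 2" using mult_mono[of 1 a 1 "c+w"] assms by simp
  have h: "\<And>z. z \<ge> 0 \<Longrightarrow> 1/(a + 1/(c+z)) = (c+z)/(a*(c+z)+1)"
  proof -
    fix z :: real assume "z \<ge> 0"
    then have "c + z > 0" using assms by simp
    then show "1/(a + 1/(c+z)) = (c+z)/(a*(c+z)+1)" by (simp add: field_simps)
  qed
  have num: "(c+u)*(a*(c+w)+1) - (c+w)*(a*(c+u)+1) = u - w" by (simp add: algebra_simps)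
  have e: "1/(a + 1/(c+u)) - 1/(a + 1/(c+w)) = (u - w) / ((a*(c+u)+1)*(a*(c+w)+1))"
    unfolding h[OF assms(3)] h[OF assms(4)] using p1 p2 num
    by (simp add: diff_frac_eq)
  have "(a*(c+u)+1)*(a*(c+w)+1) \<ge> 4" using mult_mono[OF p1 p2] p1 by simp
  then have "\<bar>u - w\<bar> / ((a*(c+u)+1)*(a*(c+w)+1)) \<le> \<bar>u - w\<bar> / 4"
    by (intro divide_left_mono) auto
  moreover have ab: "\<bar>(a*(c+u)+1)*(a*(c+w)+1)\<bar> = (a*(c+u)+1)*(a*(c+w)+1)"
    using p1 p2 by (intro abs_of_nonneg) simp
  ultimately show ?thesis unfolding e abs_divide ab by simp
qed

lemma F_contr:
  assumes "\<forall>k. a k \<ge> 1" "0 \<le> s" "s \<le> 1" "0 \<le> t" "t \<le> 1"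
  shows "\<bar>F a n s - F a n t\<bar> \<le> 2 * (1/2)^n"
  using assms
proof (induction n arbitrary: a rule: less_induct)
  case (less n)
  show ?case
  proof (cases n)
    case 0 then show ?thesis using less.prems by simp
  next
    case (Suc m)
    show ?thesis
    proof (cases m)
      case 0
      have r1: "0 \<le> s" "0 \<le> t" using less.prems by auto
      have "\<bar>F a n s - F a n t\<bar> \<le> \<bar>s - t\<bar>"
        using one_step[of "real (a 0)" s t] r1 less.prems Suc 0 by simp
      then show ?thesis using less.prems Suc 0 by simp
    next
      case (Suc j)
      define b where "b = (\<lambda>k. a (Suc (Suc k)))"
      have b1: "\<forall>k. b k \<ge> 1" using less.prems unfolding b_def by auto
      have ih: "\<bar>F b j s - F b j t\<bar> \<le> 2 * (1/2)^j"
        using less.IH[of j b] b1 less.prems \<open>n = Suc m\<close> Suc by auto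
      have rs: "0 \<le> F b j s" using F_range[OF b1, of s j] less.prems by auto
      have rt: "0 \<le> F b j t" using F_range[OF b1, of t j] less.prems by auto
      have fn: "\<And>z. F a n z = 1/(real (a 0) + 1/(real (a 1) + F b j z))"
        using \<open>n = Suc m\<close> Suc unfolding b_def by simp
      have "\<bar>F a n s - F a n t\<bar> \<le> \<bar>F b j s - F b j t\<bar> / 4"
        unfolding fn by (rule two_step) (use less.prems rs rt in auto)
      also have "\<dots> \<le> 2 * (1/2)^j / 4" using ih by simp
      also have "\<dots> = 2 * (1/2)^n" using \<open>n = Suc m\<close> Suc by simp
      finally show ?thesis .
    qed
  qed
qed

theorem mainTheorem10:
  fixes x y :: real
  assumes "(x, y) \<in> Tset"
    and "x \<notin> \<rat> \<or> y \<notin> \<rat>"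
  shows "(\<forall>k. (Gmap ^^ k) (x, y) \<noteq> (0, 0))
    \<and> ((\<forall>k. \<exists>n\<ge>1. (Gmap ^^ k) (x, y) \<in> Aset n) \<longleftrightarrow> y = 0)
    \<and> (\<forall>a :: nat \<Rightarrow> nat. (\<forall>k. a k \<ge> 1 \<and> (Gmap ^^ k) (x, y) \<in> Aset (a k))
          \<longrightarrow> is_cf_value a x)"
proof -
  define P where "P = (\<lambda>k. (Gmap ^^ k) (x,y))"
  have PS: "\<And>k. P (Suc k) = Gmap (P k)" unfolding P_def by simp
  have irr0: "irr (x,y)" using assms(2) unfolding irr_def by simp
  have orb: "\<And>k. P k \<in> Tset \<and> irr (P k)" unfolding P_def using orbit[OF assms(1) irr0] by blast
  have p1: "\<forall>k. P k \<noteq> (0,0)" using orb irr_nz by blast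
  have p2: "(\<forall>k. \<exists>n\<ge>1. P k \<in> Aset n) \<longleftrightarrow> y = 0"
  proof
    assume allA: "\<forall>k. \<exists>n\<ge>1. P k \<in> Aset n"
    have dbl: "\<And>k. snd (P (Suc (Suc k))) \<ge> 2 * snd (P k)"
    proof -
      fix k
      obtain n where n: "n\<ge>1" "P k \<in> Aset n" using allA by blast
      obtain m where m: "m\<ge>1" "P (Suc k) \<in> Aset m" using allA by blast
      have "Gmap (P k) \<in> Aset m" using m PS by simp
      from double[OF _ _ n m(1) this] orb[of k] show "snd (P (Suc (Suc k))) \<ge> 2 * snd (P k)"
        using PS by simp
    qed
    have y0: "y \<ge> 0" using assms(1) unfolding Tset_def by simp
    have pw: "\<And>k. snd (P (2*k)) \<ge> 2^k * y"
    proof -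
      fix k show "snd (P (2*k)) \<ge> 2^k * y"
      proof (induction k)
        case 0 then show ?case unfolding P_def by simp
      next
        case (Suc k)
        have "snd (P (2*Suc k)) \<ge> 2 * snd (P (2*k))" using dbl[of "2*k"] by simp
        then show ?case using Suc by simp
      qed
    qed
    have le1: "\<And>k. snd (P k) \<le> 1"
    proof -
      fix k
      obtain u v where "P k = (u,v)" by fastforce
      then show "snd (P k) \<le> 1" using orb[of k] unfolding Tset_def by auto
    qed
    show "y = 0"
    proof (rule ccontr)
      assume "y \<noteq> 0"
      then have yp: "y > 0" using y0 by simp
      obtain k where k: "1/y < 2^k" using real_arch_pow[of 2 "1/y"] by auto
      then have "1 < 2^k * y" using yp by (simp add: divide_less_eq)
      then show False using pw[of k] le1[of "2*k"] by linarith
    qed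
  next
    assume y0: "y = 0"
    have z: "\<And>k. snd (P k) = 0"
    proof -
      fix k show "snd (P k) = 0"
      proof (induction k)
        case 0 then show ?case unfolding P_def using y0 by simp
      next
        case (Suc k) then show ?case using y0_step[of "P k"] orb[of k] PS by simp
      qed
    qed
    show "\<forall>k. \<exists>n\<ge>1. P k \<in> Aset n" using y0_step orb z by blast
  qed
  have p3: "\<forall>a :: nat \<Rightarrow> nat. (\<forall>k. a k \<ge> 1 \<and> P k \<in> Aset (a k)) \<longrightarrow> is_cf_value a x"
  proof (intro allI impI)
    fix a :: "nat \<Rightarrow> nat"
    assume H: "\<forall>k. a k \<ge> 1 \<and> P k \<in> Aset (a k)"
    have a1: "\<forall>k. a k \<ge> 1" using H by simp
    have rec: "\<And>k. fst (P k) = 1/(real (a k) + fst (P (Suc k)))"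
    proof -
      fix k
      obtain u v where uv: "P k = (u,v)" by fastforce
      have hA: "(u,v) \<in> Aset (a k)" "a k \<ge> 1" using H uv by (metis, metis)
      have "1 < (real (a k) + 1) * u" using Aset_iff[OF hA(2)] hA(1) by auto
      then have u0: "u > 0" by (rule posA)
      have "P (Suc k) = (1/u - real (a k), v/u)" using PS uv G_A[OF hA(2,1)] by simp
      then show "fst (P k) = 1/(real (a k) + fst (P (Suc k)))" using uv u0 by simp
    qed
    have repr: "\<And>n k. fst (P k) = F (\<lambda>i. a (k+i)) n (fst (P (k+n)))"
    proof -
      fix n show "\<And>k. fst (P k) = F (\<lambda>i. a (k+i)) n (fst (P (k+n)))"
      proof (induction n)
        case 0 then show ?case by simp
      next
        case (Suc n)
        fix k
        have "fst (P (Suc k)) = F (\<lambda>i. a (Suc k+i)) n (fst (P (Suc k+n)))" by (rule Suc.IH)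
        then show "fst (P k) = F (\<lambda>i. a (k+i)) (Suc n) (fst (P (k+Suc n)))"
          using rec[of k] by simp
      qed
    qed
    have x0: "x = fst (P 0)" unfolding P_def by simp
    have bnd: "\<And>n. norm (cfrac a n - x) \<le> 2 * (1/2)^n"
    proof -
      fix n
      obtain u v where uv: "P n = (u,v)" by fastforce
      have r: "0 \<le> u" "u \<le> 1" using orb[of n] uv unfolding Tset_def by auto
      have "x = F a n (fst (P n))" using repr[of 0 n] x0 by simp
      then have "\<bar>cfrac a n - x\<bar> = \<bar>F a n 0 - F a n u\<bar>" using uv cfrac_F by simp
      also have "\<dots> \<le> 2 * (1/2)^n" using F_contr[OF a1, of 0 u n] r by simp
      finally show "norm (cfrac a n - x) \<le> 2 * (1/2)^n" by simp
    qed
    have g: "(\<lambda>n. 2 * (1/2::real)^n) \<longlonglongrightarrow> 0"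
      by (intro tendsto_mult_right_zero LIMSEQ_power_zero) simp
    have "(\<lambda>n. cfrac a n - x) \<longlonglongrightarrow> 0"
      by (rule tendsto_0_le[OF g, of _ 1]) (use bnd in simp)
    then show "is_cf_value a x" unfolding is_cf_value_def by (simp add: LIM_zero_iff)
  qed
  show ?thesis using p1 p2 p3 unfolding P_def by blast
qed

end
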